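(* Let $B$ be a normalized finite Blaschke product of degree $n$ with exactly one critical value. Then the monodromy group $G_B$ associated with $B$ is a cyclic group of order $n$.
   Context: A finite Blaschke product of degree $d$ is $B(z)=\gamma\prod_{j=1}^d \frac{z-a_j}{1-\overline{a_j}z}$ with $a_j\in\mathbb{D}$ and $|\gamma|=1$. It is normalized if $B(0)=0$, $B'(0)>0$, and $B(a)=0$ implies $B'(a)\neq 0$. Let $S$ be the set of critical points of $B$ in $\mathbb{D}$ and $B(S)$ the set of critical values. Since $0\notin B(S)$, $B^{-1}$ has $n$ distinct local branches $g_1,\dots,g_n$ near $0$ (with $g_1(0)=0$). The monodromy group $G_B$ is the group of permutations of $\{g_1,\dots,g_n\}$ induced by analytic continuation of these branches along closed loops in $\mathbb{D}\setminus B(S)$ based at $0$. *)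

theory Defs
  imports "HOL-Complex_Analysis.Complex_Analysis" "HOL-Algebra.Elementary_Groups"
begin

definition blaschke :: "complex \<Rightarrow> complex list \<Rightarrow> complex \<Rightarrow> complex" where
  "blaschke c as z = c * (\<Prod>a\<leftarrow>as. (z - a) / (1 - cnj a * z))"

definition normalized_blaschke :: "complex \<Rightarrow> complex list \<Rightarrow> bool" where
  "normalized_blaschke c as \<longleftrightarrow>
     norm c = 1 \<and> (\<forall>a\<in>set as. norm a < 1) \<and>
     blaschke c as 0 = 0 \<and>
     Im (deriv (blaschke c as) 0) = 0 \<and> Re (deriv (blaschke c as) 0) > 0 \<and>
     (\<forall>a\<in>ball 0 1. blaschke c as a = 0 \<longrightarrow> deriv (blaschke c as) a \<noteq> 0)"

definition crit_points :: "(complex \<Rightarrow> complex) \<Rightarrow> complex set" where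
  "crit_points B = {z \<in> ball 0 1. deriv B z = 0}"

definition crit_values :: "(complex \<Rightarrow> complex) \<Rightarrow> complex set" where
  "crit_values B = B ` crit_points B"

text \<open>Analytic continuation of the family of function elements (f t, U t), t in [0,1],
  along the path p (standard definition: neighbouring elements have equal germs).\<close>
definition analytic_continuation_along ::
  "(real \<Rightarrow> complex) \<Rightarrow> (real \<Rightarrow> complex \<Rightarrow> complex) \<Rightarrow> (real \<Rightarrow> complex set) \<Rightarrow> bool" where
  "analytic_continuation_along p f U \<longleftrightarrow>
     (\<forall>t\<in>{0..1}. open (U t) \<and> p t \<in> U t \<and> f t holomorphic_on U t \<and>
        (\<exists>d>0. \<forall>s\<in>{0..1}. \<bar>s - t\<bar> < d \<longrightarrow>
            p s \<in> U t \<and>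
            (\<exists>e>0. ball (p s) e \<subseteq> U s \<inter> U t \<and> (\<forall>z\<in>ball (p s) e. f s z = f t z))))"

definition local_inverse_at_0 :: "(complex \<Rightarrow> complex) \<Rightarrow> (complex \<Rightarrow> complex) \<Rightarrow> complex set \<Rightarrow> bool" where
  "local_inverse_at_0 B g V \<longleftrightarrow> (\<exists>r>0. ball 0 r \<subseteq> V \<and> (\<forall>z\<in>ball 0 r. B (g z) = z))"

text \<open>The fibre B^{-1}(0) in the disc; the local branches g_1..g_n of B^{-1} near 0
  are in bijection with it via g \<mapsto> g 0 (a local inverse is determined by its value at 0).\<close>
definition fibre0 :: "(complex \<Rightarrow> complex) \<Rightarrow> complex set" where
  "fibre0 B = {w \<in> ball 0 1. B w = 0}"

text \<open>Permutations of the branches (identified with their values at 0) induced by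
  analytic continuation along closed loops at 0 in D minus the critical values.\<close>
definition monodromy_perms :: "(complex \<Rightarrow> complex) \<Rightarrow> (complex \<Rightarrow> complex) set" where
  "monodromy_perms B = {\<sigma>. \<exists>p. path p \<and> pathstart p = 0 \<and> pathfinish p = 0 \<and>
      path_image p \<subseteq> ball 0 1 - crit_values B \<and>
      (\<forall>w\<in>fibre0 B. \<exists>f U. analytic_continuation_along p f U \<and>
           local_inverse_at_0 B (f 0) (U 0) \<and> f 0 0 = w \<and> f 1 0 = \<sigma> w) \<and>
      (\<forall>w. w \<notin> fibre0 B \<longrightarrow> \<sigma> w = w)}"

definition monodromy_group :: "(complex \<Rightarrow> complex) \<Rightarrow> (complex \<Rightarrow> complex) monoid" where
  "monodromy_group B = \<lparr>carrier = monodromy_perms B, monoid.mult = (\<circ>), one = id\<rparr>"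

end

theory Submission
  imports Defs "HOL-Computational_Algebra.Fundamental_Theorem_Algebra"
begin


definition mob :: "complex \<Rightarrow> complex \<Rightarrow> complex" where
  "mob a z = (z - a) / (1 - cnj a * z)"

lemma mob_ident: "cmod (1 - cnj a * z)^2 - cmod (z - a)^2 = (1 - cmod z^2)*(1 - cmod a^2)"
proof -
  have "complex_of_real (cmod (1 - cnj a * z)^2 - cmod (z - a)^2) = of_real ((1 - cmod z^2)*(1 - cmod a^2))"
    by (simp only: of_real_diff of_real_mult of_real_1 complex_norm_square complex_cnj_diff complex_cnj_mult complex_cnj_one complex_cnj_cnj) (simp add: algebra_simps)
  then show ?thesis using of_real_eq_iff by blast
qed

lemma mob_den_nz: "cmod a < 1 \<Longrightarrow> cmod z \<le> 1 \<Longrightarrow> 1 - cnj a * z \<noteq> 0"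
proof
  assume "cmod a < 1" "cmod z \<le> 1" "1 - cnj a * z = 0"
  then have "cmod (cnj a * z) = 1" by (metis eq_iff_diff_eq_0 norm_one)
  moreover have "cmod (cnj a * z) < 1" using \<open>cmod a < 1\<close> \<open>cmod z \<le> 1\<close>
    by (simp add: norm_mult) (metis mult_le_cancel_left1 norm_ge_zero not_le order_le_less_trans mult.commute mult_less_cancel_right1 linorder_not_less)
  ultimately show False by simp
qed

lemma factor_lt: assumes "cmod a < 1" "cmod z < 1" shows "cmod (z - a) < cmod (1 - cnj a * z)"
proof -
  have "(1 - cmod z^2)*(1 - cmod a^2) > 0" using assms
    by (simp add: abs_square_less_1)
  then have "cmod (z - a)^2 < cmod (1 - cnj a * z)^2" using mob_ident[of a z] by linarith
  then show ?thesis using power2_less_imp_less by fastforce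
qed

lemma factor_le: assumes "cmod a < 1" "cmod z \<ge> 1" shows "cmod (1 - cnj a * z) \<le> cmod (z - a)"
proof -
  have "(1 - cmod z^2)*(1 - cmod a^2) \<le> 0" using assms
    by (intro mult_nonpos_nonneg) (auto simp: abs_square_le_1 one_le_power power_le_one)
  then have "cmod (1 - cnj a * z)^2 \<le> cmod (z - a)^2" using mob_ident[of a z] by linarith
  then show ?thesis using power2_le_imp_le by fastforce
qed

lemma mob_in_D: "cmod a < 1 \<Longrightarrow> cmod z < 1 \<Longrightarrow> cmod (mob a z) < 1"
  unfolding mob_def using factor_lt[of a z] mob_den_nz[of a z]
  by (simp add: norm_divide divide_less_eq)

lemma mob_D_imp: assumes "cmod a < 1" "1 - cnj a * z \<noteq> 0" "cmod (mob a z) < 1" shows "cmod z < 1"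
proof (rule ccontr)
  assume "\<not> cmod z < 1"
  then have "cmod (1 - cnj a * z) \<le> cmod (z - a)" using factor_le assms by simp
  then show False using assms by (simp add: mob_def norm_divide divide_less_eq)
qed

lemma cnj_a_a: "cmod a < 1 \<Longrightarrow> 1 - cnj a * a \<noteq> 0"
proof
  assume "cmod a < 1" "1 - cnj a * a = 0"
  then have "complex_of_real (cmod a ^ 2) = 1" using complex_norm_square[of a] by (simp add: mult.commute)
  then have "cmod a ^ 2 = 1" by (metis of_real_1 of_real_eq_iff)
  with \<open>cmod a < 1\<close> show False by (simp add: power2_eq_square) (metis abs_of_nonneg norm_ge_zero abs_square_less_1 power2_eq_square less_irrefl)
qed

lemma mob_neg: "mob (-a) z = (z + a) / (1 + cnj a * z)"
  by (simp add: mob_def)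

lemma mob_inv1: assumes "cmod a < 1" "1 + cnj a * z \<noteq> 0" shows "mob a (mob (-a) z) = z"
proof -
  define D where "D = 1 + cnj a * z"
  have D: "D \<noteq> 0" using assms D_def by simp
  have h: "1 - cnj a * a \<noteq> 0" using cnj_a_a assms by simp
  have e1: "(z+a)/D - a = z*(1 - cnj a * a)/D" using D by (simp add: D_def field_simps)
  have e2: "1 - cnj a * ((z+a)/D) = (1 - cnj a * a)/D" using D by (simp add: D_def field_simps)
  show ?thesis unfolding mob_neg D_def[symmetric] by (subst mob_def, simp only: e1 e2) (use D h in simp)
qed

lemma mob_inv2: assumes "cmod a < 1" "1 - cnj a * z \<noteq> 0" shows "mob (-a) (mob a z) = z"
proof -
  have "mob (-a) (mob (-(-a)) z) = z"
    by (rule mob_inv1) (use assms in auto)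
  then show ?thesis by simp
qed


lemma den_nz': "cmod a < 1 \<Longrightarrow> cmod z < 1 \<Longrightarrow> cnj a * z \<noteq> 1"
  using mob_den_nz[of a z] by auto

lemma mob_holo: "cmod a < 1 \<Longrightarrow> mob a holomorphic_on ball 0 1"
  unfolding mob_def by (intro holomorphic_intros) (auto dest: den_nz')

lemma mob_cont: "cmod a < 1 \<Longrightarrow> continuous_on (ball 0 1) (mob a)"
  by (simp add: holomorphic_on_imp_continuous_on mob_holo)

lemma mob_zero_iff: "1 - cnj a * z \<noteq> 0 \<Longrightarrow> mob a z = 0 \<longleftrightarrow> z = a"
  by (simp add: mob_def)


definition Pf :: "complex \<Rightarrow> complex list \<Rightarrow> complex \<Rightarrow> complex" where
  "Pf c as x = c * (\<Prod>a\<leftarrow>as. x - a)"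
definition Qf :: "complex list \<Rightarrow> complex \<Rightarrow> complex" where
  "Qf as x = (\<Prod>a\<leftarrow>as. 1 - cnj a * x)"
definition Pp :: "complex \<Rightarrow> complex list \<Rightarrow> complex poly" where
  "Pp c as = smult c (\<Prod>a\<leftarrow>as. [:-a, 1:])"
definition Qp :: "complex list \<Rightarrow> complex poly" where
  "Qp as = (\<Prod>a\<leftarrow>as. [:1, -cnj a:])"

lemma prod_list_div: "(\<Prod>a\<leftarrow>as. f a / g a) = (\<Prod>a\<leftarrow>as. f a) / (\<Prod>a\<leftarrow>as. (g a :: complex))"
  by (induction as) auto

lemma B_PQ: "blaschke c as x = Pf c as x / Qf as x"
  unfolding blaschke_def Pf_def Qf_def by (simp add: prod_list_div)

lemma B_mob: "blaschke c as x = c * (\<Prod>a\<leftarrow>as. mob a x)"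
  unfolding blaschke_def mob_def by simp

lemma poly_lin: "poly (\<Prod>a\<leftarrow>as. [:-a, 1:]) (x::complex) = (\<Prod>a\<leftarrow>as. x - a)"
proof (induction as)
  case (Cons a as)
  have "poly [:-a, 1:] x = x - a" by (simp add: algebra_simps)
  then show ?case using Cons by (simp only: list.map prod_list.Cons poly_mult)
qed simp

lemma poly_Pp: "poly (Pp c as) x = Pf c as x"
  unfolding Pp_def Pf_def by (simp add: poly_lin)

lemma poly_Qp: "poly (Qp as) x = Qf as x"
  unfolding Qp_def Qf_def by (induction as) (auto simp: algebra_simps)

lemma lin_prod: "degree (\<Prod>a\<leftarrow>as. [:f a, g a:]) \<le> length as \<and>
    coeff (\<Prod>a\<leftarrow>as. [:f a, g a:]) (length as) = (\<Prod>a\<leftarrow>as. (g a :: complex))"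
proof (induction as)
  case Nil
  then show ?case by simp
next
  case (Cons a as)
  define P where "P = (\<Prod>a\<leftarrow>as. [:f a, g a:])"
  have dP: "degree P \<le> length as" and cP: "coeff P (length as) = (\<Prod>a\<leftarrow>as. g a)" using Cons unfolding P_def by auto
  have eq: "[:f a, g a:] * P = smult (f a) P + pCons 0 (smult (g a) P)"
    by (simp add: mult_pCons_left)
  have "degree ([:f a, g a:] * P) \<le> Suc (length as)"
    by (rule order_trans[OF degree_mult_le]) (use dP in simp)
  moreover have "coeff ([:f a, g a:] * P) (Suc (length as)) = g a * coeff P (length as)"
    unfolding eq using dP by (simp add: coeff_eq_0)
  ultimately show ?case using cP by (simp add: P_def)
qed

lemma norm_prod_list_le: "(\<And>a. a \<in> set as \<Longrightarrow> norm (f a) \<le> norm (g a)) \<Longrightarrow>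
    norm (\<Prod>a\<leftarrow>as. (f a :: complex)) \<le> norm (\<Prod>a\<leftarrow>as. (g a :: complex))"
proof (induction as)
  case (Cons a as)
  then show ?case by (simp add: norm_mult mult_mono)
qed simp

lemma prod_list_lt1: "(\<And>y. y \<in> set ys \<Longrightarrow> 0 \<le> y \<and> y < (1::real)) \<Longrightarrow> ys \<noteq> [] \<Longrightarrow> prod_list ys < 1"
proof (induction ys)
  case Nil
  then show ?case by simp
next
  case (Cons y ys)
  have "prod_list ys \<le> 1"
  proof (cases "ys = []")
    case False
    then show ?thesis using Cons by fastforce
  qed simp
  moreover have "0 \<le> prod_list ys"
  proof -
    have "\<forall>y\<in>set ys. 0 \<le> y" using Cons.prems(1) by auto
    then show ?thesis by (induction ys) auto
  qed
  moreover have "0 \<le> y" "y < 1" using Cons.prems(1)[of y] by auto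
  ultimately have "y * prod_list ys \<le> y" by (simp add: mult_left_le)
  then show ?case using \<open>y < 1\<close> by simp
qed

lemma norm_prod_list: "norm (\<Prod>a\<leftarrow>as. (f a :: complex)) = (\<Prod>a\<leftarrow>as. norm (f a))"
  by (induction as) (auto simp: norm_mult)

context
  fixes c :: complex and as :: "complex list"
  assumes c1: "cmod c = 1" and asD: "\<forall>a\<in>set as. cmod a < 1"
begin

lemma Q_nz: "cmod x \<le> 1 \<Longrightarrow> Qf as x \<noteq> 0"
  unfolding Qf_def using asD mob_den_nz by (auto simp: prod_list_zero_iff)

lemma P_nz: "cmod x \<ge> 1 \<Longrightarrow> Pf c as x \<noteq> 0"
  unfolding Pf_def using asD c1 by (auto simp: prod_list_zero_iff)

lemma PQ_out: "cmod x \<ge> 1 \<Longrightarrow> cmod (Qf as x) \<le> cmod (Pf c as x)"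
  unfolding Pf_def Qf_def using asD c1 factor_le by (simp add: norm_mult norm_prod_list_le)

lemma PQ_in: "cmod x < 1 \<Longrightarrow> cmod (Pf c as x) \<le> cmod (Qf as x)"
  unfolding Pf_def Qf_def using asD c1 factor_lt by (simp add: norm_mult norm_prod_list_le less_imp_le)

lemma B_in: assumes "cmod x < 1" "as \<noteq> []" shows "cmod (blaschke c as x) < 1"
proof -
  have "cmod (blaschke c as x) = (\<Prod>a\<leftarrow>as. cmod (mob a x))"
    unfolding B_mob using c1 by (simp add: norm_mult norm_prod_list)
  also have "\<dots> < 1"
    by (rule prod_list_lt1) (use assms asD mob_in_D in auto)
  finally show ?thesis .
qed

lemma recip1: "x \<noteq> 0 \<Longrightarrow> x ^ length as * cnj (\<Prod>a\<leftarrow>as. 1 / cnj x - a) = (\<Prod>a\<leftarrow>as. 1 - cnj a * x)"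
proof (induction as)
  case (Cons a as)
  have "x * cnj (1 / cnj x - a) = 1 - cnj a * x" using Cons.prems by (simp add: field_simps)
  then show ?case using Cons by (simp add: mult_ac)
qed simp

lemma recip2: "x \<noteq> 0 \<Longrightarrow> x ^ length as * cnj (\<Prod>a\<leftarrow>as. 1 - cnj a * (1 / cnj x)) = (\<Prod>a\<leftarrow>as. x - a)"
proof (induction as)
  case (Cons a as)
  have "x * cnj (1 - cnj a * (1 / cnj x)) = x - a" using Cons.prems by (simp add: field_simps)
  then show ?case using Cons by (simp add: mult_ac)
qed simp

end


lemma crit_exists:
  fixes Z :: "complex set" and k :: "complex \<Rightarrow> nat"
  assumes fin: "finite Z" and ZD: "Z \<subseteq> ball 0 1" and kpos: "\<forall>z\<in>Z. k z > 0" and card2: "card Z \<ge> 2"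
  shows "\<exists>x0\<in>ball 0 1. x0 \<notin> Z \<and>
           (\<Sum>z\<in>Z. of_nat (k z) * (1 - cnj z * z) / ((x0 - z) * (1 - cnj z * x0))) = 0"
proof -
  define w where "w z = of_nat (k z) * (1 - cnj z * z)" for z
  define d where "d z x = (x - z) * (1 - cnj z * x)" for z x :: complex
  define Sf where "Sf x = (\<Sum>z\<in>Z. w z * (\<Prod>z'\<in>Z-{z}. d z' x))" for x
  define T where "T x = (\<Sum>z\<in>Z. w z / d z x)" for x
  have zD: "cmod z < 1" if "z \<in> Z" for z using ZD that by auto
  have w0: "w z \<noteq> 0" if "z \<in> Z" for z using kpos that cnj_a_a[OF zD[OF that]] by (simp add: w_def)
  have wr: "cnj (w z) = w z" for z by (simp add: w_def mult.commute)
  have a: "Sf x = (\<Prod>z\<in>Z. d z x) * T x" if "\<forall>z\<in>Z. d z x \<noteq> 0" for x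
  proof -
    have "(\<Prod>z\<in>Z. d z x) * (w z / d z x) = w z * (\<Prod>z'\<in>Z-{z}. d z' x)" if z: "z \<in> Z" for z
    proof -
      have "(\<Prod>z\<in>Z. d z x) = d z x * (\<Prod>z'\<in>Z-{z}. d z' x)" using prod.remove[OF fin z] by simp
      then show ?thesis using \<open>\<forall>z\<in>Z. d z x \<noteq> 0\<close> z by (simp add: field_simps)
    qed
    then show ?thesis unfolding Sf_def T_def by (simp add: sum_distrib_left)
  qed
  have b: "Sf z0 \<noteq> 0" if z0: "z0 \<in> Z" for z0
  proof -
    have "Sf z0 = w z0 * (\<Prod>z'\<in>Z-{z0}. d z' z0) + (\<Sum>z\<in>Z-{z0}. w z * (\<Prod>z'\<in>Z-{z}. d z' z0))"
      unfolding Sf_def using sum.remove[OF fin z0] by simp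
    also have "(\<Sum>z\<in>Z-{z0}. w z * (\<Prod>z'\<in>Z-{z}. d z' z0)) = 0"
    proof (rule sum.neutral, rule ballI)
      fix z assume z: "z \<in> Z - {z0}"
      have "(\<Prod>z'\<in>Z-{z}. d z' z0) = 0"
        by (rule prod_zero) (use fin z z0 in \<open>auto simp: d_def intro!: bexI[of _ z0]\<close>)
      then show "w z * (\<Prod>z'\<in>Z-{z}. d z' z0) = 0" by simp
    qed
    finally have eq: "Sf z0 = w z0 * (\<Prod>z'\<in>Z-{z0}. d z' z0)" by simp
    have "(\<Prod>z'\<in>Z-{z0}. d z' z0) \<noteq> 0"
    proof -
      have "d z' z0 \<noteq> 0" if "z' \<in> Z - {z0}" for z'
        using that mob_den_nz[OF zD, of z' z0] zD[OF z0] by (auto simp: d_def)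
      then show ?thesis using fin by (simp add: prod_zero_iff)
    qed
    then show ?thesis using w0[OF z0] eq by simp
  qed
  define m where "m = card Z"
  have c: "Sf x = x ^ (2 * (m - 1)) * cnj (Sf (1 / cnj x))" if x0: "x \<noteq> 0" for x
  proof -
    have trm: "w z * (\<Prod>z'\<in>Z-{z}. d z' x) = x ^ (2 * (m - 1)) * cnj (w z * (\<Prod>z'\<in>Z-{z}. d z' (1 / cnj x)))"
      if z: "z \<in> Z" for z
    proof -
      have cardm: "card (Z - {z}) = m - 1" using z fin by (simp add: m_def)
      have hx: "x ^ (2 * (m - 1)) = (\<Prod>z'\<in>Z-{z}. x^2)" using cardm by (simp add: power_mult)
      have hd: "x^2 * cnj (d z' (1 / cnj x)) = d z' x" for z'
        using x0 by (simp add: d_def field_simps power2_eq_square)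
      have "x ^ (2 * (m - 1)) * cnj (\<Prod>z'\<in>Z-{z}. d z' (1 / cnj x)) =
            (\<Prod>z'\<in>Z-{z}. x^2) * (\<Prod>z'\<in>Z-{z}. cnj (d z' (1 / cnj x)))"
        by (simp only: hx cnj_prod)
      also have "\<dots> = (\<Prod>z'\<in>Z-{z}. x^2 * cnj (d z' (1 / cnj x)))" by (rule prod.distrib[symmetric])
      also have "\<dots> = (\<Prod>z'\<in>Z-{z}. d z' x)" by (simp only: hd)
      finally have "x ^ (2 * (m - 1)) * cnj (\<Prod>z'\<in>Z-{z}. d z' (1 / cnj x)) = (\<Prod>z'\<in>Z-{z}. d z' x)" .
      then show ?thesis using wr[of z] by (simp add: mult_ac)
    qed
    show ?thesis unfolding Sf_def by (simp add: sum_distrib_left trm del: cnj_prod)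
  qed
  have dnz: "d z x \<noteq> 0" if "z \<in> Z" "cmod x = 1" for z x
    using that mob_den_nz[OF zD[OF that(1)], of x] zD[OF that(1)] by (auto simp: d_def)
  have dd: "Sf x \<noteq> 0" if x1: "cmod x = 1" for x
  proof -
    have xx: "x * cnj x = 1" using x1 complex_norm_square[of x] by simp
    have trm: "w z / d z x * x = of_real (real (k z) * (1 - cmod z ^ 2) / cmod (x - z) ^ 2)" if z: "z \<in> Z" for z
    proof -
      have xz: "x - z \<noteq> 0" using z x1 zD[OF z] by auto
      have "d z x = x * ((x - z) * cnj (x - z))" using xx by (simp add: d_def algebra_simps)
      also have "\<dots> = x * of_real (cmod (x - z) ^ 2)" using complex_norm_square[of "x - z"] by simp
      finally have dz: "d z x = x * of_real (cmod (x - z) ^ 2)" .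
      have "w z = of_real (real (k z) * (1 - cmod z ^ 2))"
        using complex_norm_square[of z] by (simp add: w_def mult.commute)
      then show ?thesis using dz xz x1 by (auto simp: field_simps)
    qed
    have "T x * x = of_real (\<Sum>z\<in>Z. real (k z) * (1 - cmod z ^ 2) / cmod (x - z) ^ 2)"
      unfolding T_def sum_distrib_right of_real_sum by (rule sum.cong[OF refl], rule trm)
    moreover have "(\<Sum>z\<in>Z. real (k z) * (1 - cmod z ^ 2) / cmod (x - z) ^ 2) > 0"
    proof (rule sum_pos[OF fin])
      show "Z \<noteq> {}" using card2 by auto
      fix z assume z: "z \<in> Z"
      have "x - z \<noteq> 0" using z x1 zD[OF z] by auto
      moreover have "cmod z ^ 2 < 1" using zD[OF z] by (simp add: abs_square_less_1)
      ultimately show "real (k z) * (1 - cmod z ^ 2) / cmod (x - z) ^ 2 > 0" using kpos z by simp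
    qed
    ultimately have "T x \<noteq> 0" by (metis mult_zero_left of_real_eq_0_iff less_irrefl)
    moreover have "(\<Prod>z\<in>Z. d z x) \<noteq> 0" using dnz x1 fin by (simp add: prod_zero_iff)
    ultimately show ?thesis using a[of x] dnz x1 by simp
  qed
  define Sp where "Sp = (\<Sum>z\<in>Z. smult (w z) (\<Prod>z'\<in>Z-{z}. [:-z', 1:] * [:1, -cnj z':]))"
  have pSp: "poly Sp x = Sf x" for x
    unfolding Sp_def Sf_def d_def by (simp add: poly_sum poly_prod algebra_simps)
  have nc: "\<not> constant (poly Sp)"
  proof
    assume "constant (poly Sp)"
    then have cst: "Sf x = Sf y" for x y using pSp unfolding constant_def by metis
    obtain z0 where z0: "z0 \<in> Z" using card2 by fastforce
    define s where "s = Sf 1"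
    have s0: "s \<noteq> 0" using b[OF z0] cst s_def by metis
    have "s = cnj s" using c[of 1] s_def by simp
    moreover have "s = 2 ^ (2 * (m - 1)) * cnj s" using c[of 2] cst[of 2 1] cst[of "1/2" 1] s_def by simp
    ultimately have "s = 2 ^ (2 * (m - 1)) * s" by simp
    then have "(2::complex) ^ (2 * (m - 1)) = 1" using s0 by simp
    then have "(2::real) ^ (2 * (m - 1)) = 1" by (metis of_real_eq_1_iff of_real_numeral of_real_power)
    moreover have "2 * (m - 1) > 0" using card2 m_def by simp
    then have "(2::real) \<le> 2 ^ (2 * (m - 1))" by (intro self_le_power) auto
    ultimately show False by simp
  qed
  obtain x1 where x1: "Sf x1 = 0" using fundamental_theorem_of_algebra[OF nc] pSp by metis
  have "\<exists>x0. cmod x0 < 1 \<and> Sf x0 = 0"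
  proof (cases "cmod x1 < 1")
    case True
    then show ?thesis using x1 by blast
  next
    case False
    have "cmod x1 \<noteq> 1" using dd x1 by blast
    then have gt: "cmod x1 > 1" using False by simp
    define x0 where "x0 = 1 / cnj x1"
    have x10: "x1 \<noteq> 0" using gt by auto
    have "cmod x0 < 1" using gt by (simp add: x0_def norm_divide divide_less_eq)
    moreover have "Sf x0 = 0" using c[of x0] x10 x1 by (simp add: x0_def)
    ultimately show ?thesis by blast
  qed
  then obtain x0 where x0: "cmod x0 < 1" "Sf x0 = 0" by blast
  have x0Z: "x0 \<notin> Z" using b x0 by blast
  have dx0: "\<forall>z\<in>Z. d z x0 \<noteq> 0" using x0Z x0 mob_den_nz zD by (auto simp: d_def)
  then have "(\<Prod>z\<in>Z. d z x0) \<noteq> 0" using fin by (simp add: prod_zero_iff)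
  then have "T x0 = 0" using a[OF dx0] x0 by simp
  then show ?thesis using x0 x0Z by (auto simp: T_def w_def d_def)
qed


lemma eq_at0:
  fixes f g :: "complex \<Rightarrow> complex"
  assumes "isCont f 0" "isCont g 0" "\<And>x. x \<noteq> 0 \<Longrightarrow> f x = g x" shows "f 0 = g 0"
proof -
  have l1: "(f \<longlongrightarrow> f 0) (at 0)" using assms(1) isCont_def by blast
  have l2: "(g \<longlongrightarrow> g 0) (at 0)" using assms(2) isCont_def by blast
  have ev: "\<forall>\<^sub>F x in at 0. g x = f x" unfolding eventually_at_filter using assms(3) by simp
  have l3: "(f \<longlongrightarrow> g 0) (at 0)" by (rule Lim_transform_eventually[OF l2 ev])
  show ?thesis by (rule tendsto_unique[OF at_neq_bot l1 l3])
qed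

definition Dm :: "complex \<Rightarrow> complex \<Rightarrow> complex" where
  "Dm a x = (1 - cnj a * a) / (1 - cnj a * x)^2"

lemma mob_deriv: assumes "1 - cnj a * x \<noteq> 0" shows "(mob a has_field_derivative Dm a x) (at x)"
proof -
  have d1: "((\<lambda>x. x - a) has_field_derivative 1 - 0) (at x)" by (intro DERIV_diff DERIV_ident DERIV_const)
  have d2: "((\<lambda>x. 1 - cnj a * x) has_field_derivative 0 - cnj a * 1) (at x)"
    by (intro DERIV_diff DERIV_cmult DERIV_ident DERIV_const)
  have A: "((\<lambda>x. (x - a) / (1 - cnj a * x)) has_field_derivative
          ((1 - 0) * (1 - cnj a * x) - (x - a) * (0 - cnj a * 1)) / ((1 - cnj a * x) * (1 - cnj a * x))) (at x)"
    by (rule DERIV_divide[OF d1 d2 assms])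
  have eq: "(1 - 0) * (1 - cnj a * x) - (x - a) * (0 - cnj a * 1) = 1 - cnj a * a"
    by (simp add: algebra_simps)
  have "((\<lambda>x. (x - a) / (1 - cnj a * x)) has_field_derivative Dm a x) (at x)"
    using A unfolding Dm_def power2_eq_square eq .
  then show ?thesis unfolding mob_def[abs_def] .
qed

lemma Dm_nz: assumes "cmod a < 1" "1 - cnj a * x \<noteq> 0" shows "Dm a x \<noteq> 0"
proof -
  have "1 - cnj a * a \<noteq> 0" by (rule cnj_a_a[OF assms(1)])
  moreover have "(1 - cnj a * x)^2 \<noteq> 0" using assms(2) by simp
  ultimately show ?thesis unfolding Dm_def by (simp only: divide_eq_0_iff de_Morgan_disj) simp
qed

locale bstr =
  fixes B :: "complex \<Rightarrow> complex" and b v l :: complex and n :: nat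
  assumes b: "cmod b < 1" and v: "cmod v < 1" and l: "cmod l = 1" and b0: "b \<noteq> 0"
    and v0: "v \<noteq> 0" and n2: "n \<ge> 2" and crit: "crit_values B = {v}"
    and Bform: "\<And>x. x \<in> ball 0 1 \<Longrightarrow> B x = mob (-v) (l * mob b x ^ n)"
    and B0: "B 0 = 0"
begin

definition H :: "complex \<Rightarrow> complex \<Rightarrow> complex" where
  "H x z = l * (x - b)^n - mob v z * (1 - cnj b * x)^n"

lemma l0: "l \<noteq> 0" using l by auto

lemma inD: assumes "x \<in> ball 0 1" shows "cmod (l * mob b x ^ n) < 1"
proof -
  have "cmod x < 1" using assms by simp
  then have "cmod (mob b x) < 1" using mob_in_D[OF b] by simp
  then show ?thesis using l n2 by (simp add: norm_mult norm_power power_less_one_iff)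
qed

lemma den_pos: "cmod y < 1 \<Longrightarrow> 1 + cnj v * y \<noteq> 0"
  using mob_den_nz[of "-v" y] v by simp

lemma mobvB: "x \<in> ball 0 1 \<Longrightarrow> mob v (B x) = l * mob b x ^ n"
  using Bform[of x] mob_inv1[OF v den_pos[OF inD]] by simp

lemma B_D: "x \<in> ball 0 1 \<Longrightarrow> B x \<in> ball 0 1"
  using Bform[of x] mob_in_D[of "-v"] v inD by simp

lemma H_of_B: assumes "x \<in> ball 0 1" "B x = z" shows "H x z = 0"
proof -
  have d: "1 - cnj b * x \<noteq> 0" using mob_den_nz[OF b, of x] assms by simp
  have "mob v z = l * ((x - b) / (1 - cnj b * x)) ^ n" using mobvB[OF assms(1)] assms(2) by (simp add: mob_def)
  then show ?thesis using d by (simp add: H_def power_divide field_simps)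
qed

lemma H_imp: assumes "z \<in> ball 0 1" "H x z = 0" shows "x \<in> ball 0 1 \<and> B x = z"
proof -
  have d: "1 - cnj b * x \<noteq> 0"
  proof
    assume "1 - cnj b * x = 0"
    then have "l * (x - b)^n = 0" using assms(2) n2 by (simp add: H_def)
    then have "x = b" using l0 by simp
    then show False using \<open>1 - cnj b * x = 0\<close> cnj_a_a[OF b] by (simp add: mult.commute)
  qed
  have h1: "l * (x - b)^n = mob v z * (1 - cnj b * x)^n" using assms(2) by (simp add: H_def)
  have "l * mob b x ^ n = l * (x - b)^n / (1 - cnj b * x)^n" by (simp add: mob_def[of b] power_divide)
  also have "\<dots> = mob v z" using h1 d by simp
  finally have e: "l * mob b x ^ n = mob v z" .
  have "cmod (mob v z) < 1" using mob_in_D[OF v] assms(1) by simp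
  then have "cmod (l * mob b x ^ n) < 1" using e by simp
  then have "cmod (mob b x) ^ n < 1" using l by (simp add: norm_mult norm_power)
  then have "cmod (mob b x) < 1" using power_less_one_iff[OF norm_ge_zero] by blast
  then have xD: "x \<in> ball 0 1" using mob_D_imp[OF b d] by simp
  have "B x = mob (-v) (mob v z)" using Bform[OF xD] e by simp
  also have "\<dots> = z" by (rule mob_inv2[OF v]) (use mob_den_nz[OF v, of z] assms(1) in simp)
  finally show ?thesis using xD by simp
qed

lemma H_holo: assumes "f holomorphic_on S" "S \<subseteq> ball 0 1" shows "(\<lambda>z. H (f z) z) holomorphic_on S"
proof -
  have "mob v holomorphic_on S" using mob_holo[OF v] holomorphic_on_subset assms(2) by blast
  then show ?thesis unfolding H_def by (intro holomorphic_intros assms(1))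
qed

lemma track:
  assumes AC: "analytic_continuation_along p f U" and pp: "path p" and pim: "path_image p \<subseteq> ball 0 1"
    and p0: "pathstart p = 0" and li: "local_inverse_at_0 B (f 0) (U 0)" and f00: "f 0 0 \<in> ball 0 1"
  shows "\<forall>t\<in>{0..1}. f t (p t) \<in> ball 0 1 \<and> B (f t (p t)) = p t"
    and "continuous_on {0..1} (\<lambda>t. f t (p t))"
proof -
  have AC': "\<And>t. t \<in> {0..1} \<Longrightarrow> open (U t) \<and> p t \<in> U t \<and> f t holomorphic_on U t \<and>
        (\<exists>d>0. \<forall>s\<in>{0..1}. \<bar>s - t\<bar> < d \<longrightarrow> p s \<in> U t \<and>
            (\<exists>e>0. ball (p s) e \<subseteq> U s \<inter> U t \<and> (\<forall>z\<in>ball (p s) e. f s z = f t z)))"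
    using AC unfolding analytic_continuation_along_def by blast
  have pD: "p t \<in> ball 0 1" if "t \<in> {0..1}" for t
  proof -
    have "p t \<in> path_image p" unfolding path_image_def using that by simp
    then show ?thesis using pim by blast
  qed
  have pc: "continuous_on {0..1} p" using pp unfolding path_def by simp
  show "continuous_on {0..1} (\<lambda>t. f t (p t))"
    unfolding continuous_on_eq_continuous_within
  proof
    fix t :: real assume t: "t \<in> {0..1}"
    obtain d where d: "d > 0" and dP: "\<forall>s\<in>{0..1}. \<bar>s - t\<bar> < d \<longrightarrow> p s \<in> U t \<and>
            (\<exists>e>0. ball (p s) e \<subseteq> U s \<inter> U t \<and> (\<forall>z\<in>ball (p s) e. f s z = f t z))"
      using AC'[OF t] by blast
    have "isCont (f t) (p t)"
      using AC'[OF t] holomorphic_on_imp_continuous_on continuous_on_eq_continuous_at by blast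
    moreover have "continuous (at t within {0..1}) p"
      using pc t continuous_on_eq_continuous_within by blast
    ultimately have c1: "continuous (at t within {0..1}) (\<lambda>s. f t (p s))"
      by (rule continuous_within_compose3)
    show "continuous (at t within {0..1}) (\<lambda>t. f t (p t))"
    proof (rule continuous_transform_within[OF c1 d t])
      fix s assume s: "s \<in> {0..1}" "dist s t < d"
      then obtain e where "e > 0" "\<forall>z\<in>ball (p s) e. f s z = f t z"
        using dP by (auto simp: dist_real_def)
      then show "f t (p s) = f s (p s)" by simp
    qed
  qed
  define \<Phi> where "\<Phi> t \<longleftrightarrow> (\<exists>e>0. \<forall>z\<in>ball (p t) e. H (f t z) z = 0)" for t
  have loc: "\<exists>d>0. \<forall>s\<in>{0..1}. \<bar>s - t\<bar> < d \<longrightarrow> (\<Phi> s \<longleftrightarrow> \<Phi> t)" if t: "t \<in> {0..1}" for t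
  proof -
    obtain d1 where d1: "d1 > 0" and dP: "\<forall>s\<in>{0..1}. \<bar>s - t\<bar> < d1 \<longrightarrow> p s \<in> U t \<and>
            (\<exists>e>0. ball (p s) e \<subseteq> U s \<inter> U t \<and> (\<forall>z\<in>ball (p s) e. f s z = f t z))"
      using AC'[OF t] by blast
    have "open (U t \<inter> ball 0 1)" "p t \<in> U t \<inter> ball 0 1" using AC'[OF t] pD[OF t] by auto
    then obtain r where r: "r > 0" "ball (p t) r \<subseteq> U t \<inter> ball 0 1"
      using open_contains_ball_eq by blast
    obtain d2 where d2: "d2 > 0" "\<forall>s\<in>{0..1}. dist s t < d2 \<longrightarrow> dist (p s) (p t) < r/2"
      using pc t r(1) unfolding continuous_on_iff by (metis half_gt_zero)
    have hol: "(\<lambda>z. H (f t z) z) holomorphic_on ball (p t) r"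
      by (rule H_holo) (use AC'[OF t] r holomorphic_on_subset in auto)
    have ident: "\<forall>z\<in>ball (p t) r. H (f t z) z = 0"
      if "c \<in> ball (p t) r" "e > 0" "ball c e \<subseteq> ball (p t) r" "\<forall>z\<in>ball c e. H (f t z) z = 0" for c e
    proof
      fix z assume z: "z \<in> ball (p t) r"
      show "H (f t z) z = 0"
        by (rule analytic_continuation[OF hol open_ball convex_connected[OF convex_ball] that(3) that(1)])
           (use that z in \<open>auto simp: islimpt_ball\<close>)
    qed
    show ?thesis
    proof (intro exI[of _ "min d1 d2"] conjI ballI impI)
      show "min d1 d2 > 0" using d1 d2 by simp
      fix s assume s: "s \<in> {0..1}" "\<bar>s - t\<bar> < min d1 d2"
      then obtain e where e: "e > 0" "ball (p s) e \<subseteq> U s \<inter> U t" "\<forall>z\<in>ball (p s) e. f s z = f t z"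
        using dP by auto
      have ps: "dist (p s) (p t) < r/2" using d2 s by (auto simp: dist_real_def)
      define e' where "e' = min e (r/2)"
      have e'1: "ball (p s) e' \<subseteq> ball (p t) r"
      proof
        fix x assume "x \<in> ball (p s) e'"
        then have "dist (p s) x < r/2" by (simp add: e'_def)
        moreover have "dist (p t) x \<le> dist (p t) (p s) + dist (p s) x" by (rule dist_triangle)
        ultimately show "x \<in> ball (p t) r" using ps by (simp add: dist_commute)
      qed
      have e': "e' > 0" "ball (p s) e' \<subseteq> ball (p t) r" "ball (p s) e' \<subseteq> ball (p s) e"
        using e r e'1 unfolding e'_def by auto
      have pst: "p s \<in> ball (p t) r" using ps r by (simp add: dist_commute)
      show "\<Phi> s \<longleftrightarrow> \<Phi> t"
      proof
        assume "\<Phi> s"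
        then obtain e1 where e1: "e1 > 0" "\<forall>z\<in>ball (p s) e1. H (f s z) z = 0" unfolding \<Phi>_def by blast
        have "\<forall>z\<in>ball (p s) (min e1 e'). H (f t z) z = 0"
        proof
          fix z assume "z \<in> ball (p s) (min e1 e')"
          then have "z \<in> ball (p s) e1" "z \<in> ball (p s) e" using e'(3) by auto
          then show "H (f t z) z = 0" using e1(2) e(3) by metis
        qed
        then have "\<forall>z\<in>ball (p t) r. H (f t z) z = 0"
        proof (intro ident[of "p s" "min e1 e'"] pst)
          show "min e1 e' > 0" using e1(1) e'(1) by simp
          show "ball (p s) (min e1 e') \<subseteq> ball (p t) r" using e'(2) by auto
        qed
        then show "\<Phi> t" unfolding \<Phi>_def using r by blast
      next
        assume "\<Phi> t"
        then obtain e0 where e0: "e0 > 0" "\<forall>z\<in>ball (p t) e0. H (f t z) z = 0" unfolding \<Phi>_def by blast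
        have all: "\<forall>z\<in>ball (p t) r. H (f t z) z = 0"
        proof (rule ident[of "p t" "min e0 r"])
          show "p t \<in> ball (p t) r" using r(1) by simp
          show "min e0 r > 0" using e0(1) r(1) by simp
          show "ball (p t) (min e0 r) \<subseteq> ball (p t) r" by auto
          show "\<forall>z\<in>ball (p t) (min e0 r). H (f t z) z = 0" using e0(2) by auto
        qed
        have "\<forall>z\<in>ball (p s) e'. H (f s z) z = 0"
        proof
          fix z assume "z \<in> ball (p s) e'"
          then have "z \<in> ball (p t) r" "z \<in> ball (p s) e" using e'(2,3) by auto
          then show "H (f s z) z = 0" using all e(3) by metis
        qed
        then show "\<Phi> s" unfolding \<Phi>_def using e' by blast
      qed
    qed
  qed
  have const: "\<Phi> constant_on {0..1}"
  proof (rule locally_constant_imp_constant[OF connected_Icc])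
    fix a :: real assume a: "a \<in> {0..1}"
    obtain d where d: "d > 0" "\<forall>s\<in>{0..1}. \<bar>s - a\<bar> < d \<longrightarrow> (\<Phi> s \<longleftrightarrow> \<Phi> a)" using loc[OF a] by blast
    show "\<exists>T. openin (top_of_set {0..1}) T \<and> a \<in> T \<and> (\<forall>x\<in>T. \<Phi> x = \<Phi> a)"
    proof (intro exI[of _ "{0..1} \<inter> ball a d"] conjI ballI)
      show "openin (top_of_set {0..1}) ({0..1} \<inter> ball a d)" by (simp add: openin_open_Int)
      show "a \<in> {0..1} \<inter> ball a d" using a d(1) by simp
      fix x assume "x \<in> {0..1} \<inter> ball a d"
      then show "\<Phi> x = \<Phi> a" using d(2) by (simp add: dist_real_def abs_minus_commute)
    qed
  qed
  have "\<Phi> 0"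
  proof -
    obtain r0 where r0: "r0 > 0" "ball 0 r0 \<subseteq> U 0" "\<forall>z\<in>ball 0 r0. B (f 0 z) = z"
      using li unfolding local_inverse_at_0_def by blast
    have "continuous_on (ball 0 r0) (f 0)"
      using AC'[of 0] r0 holomorphic_on_imp_continuous_on holomorphic_on_subset by auto
    then have "\<forall>\<epsilon>>0. \<exists>\<delta>>0. \<forall>x'\<in>ball 0 r0. dist x' 0 < \<delta> \<longrightarrow> dist (f 0 x') (f 0 0) < \<epsilon>"
    proof -
      have "0 \<in> ball 0 r0" using r0(1) by simp
      then show ?thesis using \<open>continuous_on (ball 0 r0) (f 0)\<close> unfolding continuous_on_iff by blast
    qed
    moreover have "1 - cmod (f 0 0) > 0" using f00 by simp
    ultimately obtain \<delta> where \<delta>: "\<delta> > 0" "\<forall>x'\<in>ball 0 r0. dist x' 0 < \<delta> \<longrightarrow> dist (f 0 x') (f 0 0) < 1 - cmod (f 0 0)"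
      by blast
    have H0: "\<forall>z\<in>ball 0 (min r0 (min \<delta> 1)). H (f 0 z) z = 0"
    proof
      fix z :: complex assume z: "z \<in> ball 0 (min r0 (min \<delta> 1))"
      then have "dist (f 0 z) (f 0 0) < 1 - cmod (f 0 0)" using \<delta> by (auto simp: dist_commute)
      moreover have "cmod (f 0 z) \<le> cmod (f 0 0) + cmod (f 0 z - f 0 0)" by (rule norm_triangle_sub)
      ultimately have "cmod (f 0 z) < 1" by (simp add: dist_norm)
      then show "H (f 0 z) z = 0"
        by (intro H_of_B) (use z r0 in auto)
    qed
    have "p 0 = 0" using p0 by (simp add: pathstart_def)
    moreover have "min r0 (min \<delta> 1) > 0" using r0(1) \<delta>(1) by simp
    ultimately show ?thesis unfolding \<Phi>_def using H0 by (intro exI[of _ "min r0 (min \<delta> 1)"]) simp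
  qed
  moreover obtain c where c: "\<forall>t\<in>{0..1}. \<Phi> t = c" using const unfolding constant_on_def by blast
  ultimately have all: "\<Phi> t" if "t \<in> {0..1}" for t
    using that by (metis atLeastAtMost_iff order_refl zero_le_one)
  show "\<forall>t\<in>{0..1}. f t (p t) \<in> ball 0 1 \<and> B (f t (p t)) = p t"
  proof
    fix t :: real assume t: "t \<in> {0..1}"
    then obtain e where "e > 0" "\<forall>z\<in>ball (p t) e. H (f t z) z = 0" using all unfolding \<Phi>_def by blast
    then have "H (f t (p t)) (p t) = 0" by simp
    then show "f t (p t) \<in> ball 0 1 \<and> B (f t (p t)) = p t" using H_imp pD[OF t] by blast
  qed
qed


definition tau :: "complex \<Rightarrow> complex \<Rightarrow> complex" where
  "tau \<mu> w = (if w \<in> fibre0 B then mob (-b) (\<mu> * mob b w) else w)"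

lemma mobv0: "mob v 0 = -v" by (simp add: mob_def)

lemma fibre_iff: "w \<in> fibre0 B \<longleftrightarrow> w \<in> ball 0 1 \<and> l * mob b w ^ n = -v"
proof
  assume "w \<in> fibre0 B"
  then have "w \<in> ball 0 1" "B w = 0" by (auto simp: fibre0_def)
  then show "w \<in> ball 0 1 \<and> l * mob b w ^ n = -v" using mobvB[of w] mobv0 by simp
next
  assume "w \<in> ball 0 1 \<and> l * mob b w ^ n = -v"
  then have "w \<in> ball 0 1" "B w = 0" using Bform[of w] by (auto simp: mob_def)
  then show "w \<in> fibre0 B" by (simp add: fibre0_def)
qed

lemma zero_fibre: "0 \<in> fibre0 B" using B0 by (simp add: fibre0_def)

lemma mobv_ne0: "x \<in> ball 0 1 \<Longrightarrow> x \<noteq> v \<Longrightarrow> mob v x \<noteq> 0"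
  using mob_zero_iff[of v x] mob_den_nz[OF v, of x] by simp

lemma perm_is_tau: assumes "\<sigma> \<in> monodromy_perms B" shows "\<exists>\<mu>. \<mu>^n = 1 \<and> \<sigma> = tau \<mu>"
proof -
  obtain p where pp: "path p" and p0: "pathstart p = 0" and p1: "pathfinish p = 0"
    and pim: "path_image p \<subseteq> ball 0 1 - crit_values B"
    and cont: "\<forall>w\<in>fibre0 B. \<exists>f U. analytic_continuation_along p f U \<and>
           local_inverse_at_0 B (f 0) (U 0) \<and> f 0 0 = w \<and> f 1 0 = \<sigma> w"
    and out: "\<forall>w. w \<notin> fibre0 B \<longrightarrow> \<sigma> w = w"
    using assms unfolding monodromy_perms_def by blast
  have "\<forall>w\<in>fibre0 B. \<exists>fU. analytic_continuation_along p (fst fU) (snd fU) \<and>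
           local_inverse_at_0 B (fst fU 0) (snd fU 0) \<and> fst fU 0 0 = w \<and> fst fU 1 0 = \<sigma> w"
    using cont by auto
  then obtain g where g: "\<forall>w\<in>fibre0 B. analytic_continuation_along p (fst (g w)) (snd (g w)) \<and>
           local_inverse_at_0 B (fst (g w) 0) (snd (g w) 0) \<and> fst (g w) 0 0 = w \<and> fst (g w) 1 0 = \<sigma> w"
    by (rule bchoice[THEN exE]) blast
  define F where "F w = fst (g w)" for w
  have pim': "path_image p \<subseteq> ball 0 1" using pim by blast
  have pt: "p t \<in> ball 0 1" "p t \<noteq> v" if "t \<in> {0..1}" for t
  proof -
    have "p t \<in> path_image p" unfolding path_image_def using that by simp
    then show "p t \<in> ball 0 1" "p t \<noteq> v" using pim crit by auto
  qed
  have pz: "p 0 = 0" "p 1 = 0" using p0 p1 by (auto simp: pathstart_def pathfinish_def)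
  define R where "R w t = mob b (F w t (p t))" for w t
  have Rprops: "continuous_on {0..1} (R w) \<and> (\<forall>t\<in>{0..1}. l * R w t ^ n = mob v (p t) \<and> R w t \<noteq> 0)
      \<and> R w 0 = mob b w \<and> R w 1 = mob b (\<sigma> w) \<and> \<sigma> w \<in> ball 0 1" if w: "w \<in> fibre0 B" for w
  proof -
    have gw: "analytic_continuation_along p (F w) (snd (g w))" "local_inverse_at_0 B (F w 0) (snd (g w) 0)"
      "F w 0 0 = w" "F w 1 0 = \<sigma> w" using g w unfolding F_def by auto
    have wD: "w \<in> ball 0 1" using w by (simp add: fibre0_def)
    have tr1: "\<forall>t\<in>{0..1}. F w t (p t) \<in> ball 0 1 \<and> B (F w t (p t)) = p t"
      by (rule track(1)[OF gw(1) pp pim' p0 gw(2)]) (use gw(3) wD in simp)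
    have tr2: "continuous_on {0..1} (\<lambda>t. F w t (p t))"
      by (rule track(2)[OF gw(1) pp pim' p0 gw(2)]) (use gw(3) wD in simp)
    have c: "continuous_on {0..1} (R w)" unfolding R_def
      by (rule continuous_on_compose2[OF mob_cont[OF b] tr2]) (use tr1 in auto)
    have e: "l * R w t ^ n = mob v (p t) \<and> R w t \<noteq> 0" if t: "t \<in> {0..1}" for t
    proof -
      have "l * R w t ^ n = mob v (p t)" unfolding R_def using mobvB[of "F w t (p t)"] tr1 t by simp
      moreover have "mob v (p t) \<noteq> 0" using mobv_ne0 pt[OF t] by simp
      ultimately show ?thesis using n2 by (auto simp: power_0_left)
    qed
    have "\<sigma> w \<in> ball 0 1" using tr1 gw(4) pz(2) by (metis atLeastAtMost_iff order_refl zero_le_one)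
    then show ?thesis using c e gw(3,4) pz unfolding R_def by auto
  qed
  define \<mu> where "\<mu> = R 0 1 / R 0 0"
  have R0: "continuous_on {0..1} (R 0)" "\<And>t. t \<in> {0..1} \<Longrightarrow> l * R 0 t ^ n = mob v (p t) \<and> R 0 t \<noteq> 0"
    using Rprops[OF zero_fibre] by auto
  have mu: "\<mu>^n = 1"
  proof -
    have "l * R 0 1 ^ n = l * R 0 0 ^ n" using R0(2)[of 0] R0(2)[of 1] pz by simp
    then have "R 0 1 ^ n = R 0 0 ^ n" using l0 by simp
    then show ?thesis using R0(2)[of 0] by (simp add: \<mu>_def power_divide)
  qed
  have sig: "\<sigma> w = tau \<mu> w" for w
  proof (cases "w \<in> fibre0 B")
    case False
    then show ?thesis using out by (simp add: tau_def)
  next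
    case True
    note Rw = Rprops[OF True]
    define h where "h t = R w t / R 0 t" for t
    have hc: "continuous_on {0..1} h" unfolding h_def
      by (intro continuous_on_divide Rw[THEN conjunct1] R0(1)) (use R0(2) in auto)
    have hn: "h t ^ n = 1" if t: "t \<in> {0..1}" for t
    proof -
      have "l * R w t ^ n = l * R 0 t ^ n" using Rw R0(2)[OF t] t by auto
      then have "R w t ^ n = R 0 t ^ n" using l0 by simp
      then show ?thesis using R0(2)[OF t] by (simp add: h_def power_divide)
    qed
    have "finite (h ` {0..1})"
      by (rule finite_subset[of _ "{z. z^n = 1}"]) (use hn finite_roots_unity n2 in auto)
    then have "h constant_on {0..1}"
      by (intro continuous_finite_range_constant[OF connected_Icc hc])
    then have h10: "h 1 = h 0" unfolding constant_on_def by (metis atLeastAtMost_iff order_refl zero_le_one)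
    have "mob b (\<sigma> w) = R w 1" using Rw by simp
    also have "\<dots> = h 1 * R 0 1" using R0(2)[of 1] by (simp add: h_def)
    also have "\<dots> = h 0 * R 0 1" using h10 by simp
    also have "\<dots> = \<mu> * mob b w" using Rw R0(2)[of 0] by (simp add: h_def \<mu>_def)
    finally have eq: "mob b (\<sigma> w) = \<mu> * mob b w" .
    have "\<sigma> w = mob (-b) (mob b (\<sigma> w))"
      by (rule mob_inv2[OF b, symmetric]) (use mob_den_nz[OF b, of "\<sigma> w"] Rw in auto)
    then show ?thesis using eq True by (simp add: tau_def)
  qed
  show ?thesis using mu sig by blast
qed


lemma tau_in: assumes mu: "\<mu>^n = 1" shows "tau \<mu> \<in> monodromy_perms B"
proof -
  have npos: "n > 0" using n2 by simp
  obtain k where k: "k < n" "\<mu> = cis (2 * pi * real k / real n)"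
    using Complex.bij_betw_roots_unity[OF npos] mu unfolding bij_betw_def by (metis (mono_tags, lifting) imageE lessThan_iff mem_Collect_eq)
  define K where "K = real k"
  have K0: "K \<ge> 0" by (simp add: K_def)
  have cisK: "cis (2 * pi * K) = 1" using cis_multiple_2pi[of "real k"] by (simp add: K_def)
  define p where "p t = mob (-v) (-v * cis (2 * pi * K * t))" for t :: real
  define Y where "Y t z = mob v z / (-v * cis (2 * pi * K * t))" for t :: real and z
  define rt where "rt y = exp (Ln y / of_nat n)" for y :: complex
  define U where "U t = ball 0 1 \<inter> (\<lambda>z. Re (Y t z)) -` {0<..}" for t :: real
  define F where "F w t z = mob (-b) (mob b w * cis (2 * pi * K * t / real n) * rt (Y t z))" for w and t :: real and z
  have vcis: "cmod (-v * cis x) < 1" for x using v by (simp add: norm_mult)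
  have vcis0: "-v * cis x \<noteq> 0" for x using v0 by simp
  have p_props: "p t \<in> ball 0 1 \<and> p t \<noteq> v \<and> mob v (p t) = -v * cis (2 * pi * K * t)" for t
  proof -
    have m: "mob v (p t) = -v * cis (2 * pi * K * t)"
      unfolding p_def by (rule mob_inv1[OF v den_pos[OF vcis]])
    have "p t \<in> ball 0 1" unfolding p_def using mob_in_D[of "-v"] v vcis by simp
    moreover have "p t \<noteq> v" using m vcis0 mob_def by auto
    ultimately show ?thesis using m by simp
  qed
  have p0: "p 0 = 0" by (simp add: p_def mob_def)
  have p1: "p 1 = 0" using cisK by (simp add: p_def mob_def)
  have pc: "continuous_on {0..1} p"
  proof -
    have "continuous_on {0..1} (\<lambda>t. (-v * cis (2 * pi * K * t) - - v) / (1 - cnj (- v) * (-v * cis (2 * pi * K * t))))"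
      by (intro continuous_intros) (use den_pos[OF vcis] in auto)
    then show ?thesis unfolding p_def mob_def by simp
  qed
  have Ysame: "Y t (p t) = 1" for t using p_props[of t] vcis0 by (simp add: Y_def)
  have rtn: "rt y ^ n = y" if "y \<noteq> 0" for y
  proof -
    have "rt y ^ n = exp (of_nat n * (Ln y / of_nat n))" unfolding rt_def by (rule exp_of_nat_mult[symmetric])
    also have "\<dots> = y" using npos that by simp
    finally show ?thesis .
  qed
  have rt1: "rt 1 = 1" by (simp add: rt_def)
  have UD: "U t \<subseteq> ball 0 1" for t unfolding U_def by auto
  have UD': "cmod z < 1" if "z \<in> U t" for z t
  proof -
    have "z \<in> ball 0 1" using UD that by blast
    then show ?thesis by simp
  qed
  have Upos: "z \<in> U t \<Longrightarrow> Re (Y t z) > 0" for t z unfolding U_def by auto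
  have Uopen: "open (U t)" for t
  proof -
    have "continuous_on (ball 0 1) (\<lambda>z. Re (Y t z))" unfolding Y_def
      by (intro continuous_intros mob_cont[OF v]) (use vcis0 in auto)
    then show ?thesis unfolding U_def by (intro continuous_open_preimage) auto
  qed
  have pU: "p t \<in> U t" for t unfolding U_def using p_props[of t] Ysame[of t] by simp
  have Xfact: "cmod X < 1 \<and> l * X^n = mob v z"
    if w: "w \<in> fibre0 B" and z: "z \<in> U t" and X: "X = mob b w * cis (2 * pi * K * t / real n) * rt (Y t z)" for w t z X
  proof -
    have lw: "l * mob b w ^ n = -v" using w fibre_iff by simp
    have Y0: "Y t z \<noteq> 0" using Upos[OF z] by auto
    have "l * X^n = (l * mob b w ^ n) * cis (2 * pi * K * t / real n) ^ n * rt (Y t z) ^ n"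
      by (simp add: X power_mult_distrib)
    also have "\<dots> = (-v) * cis (2 * pi * K * t) * Y t z"
    proof -
      have "cis (2 * pi * K * t / real n) ^ n = cis (2 * pi * K * t)"
        using npos by (simp add: Complex.DeMoivre)
      then show ?thesis by (simp add: lw rtn[OF Y0])
    qed
    also have "\<dots> = mob v z" using vcis0 by (simp add: Y_def)
    finally have e: "l * X^n = mob v z" .
    have "z \<in> ball 0 1" using UD z by blast
    then have "cmod (mob v z) < 1" using mob_in_D[OF v] by simp
    then have "cmod X ^ n < 1" using e l by (metis norm_mult norm_power mult_1)
    then have "cmod X < 1" using power_less_one_iff[OF norm_ge_zero] by blast
    then show ?thesis using e by simp
  qed
  have Fgood: "F w t z \<in> ball 0 1 \<and> B (F w t z) = z" if w: "w \<in> fibre0 B" and z: "z \<in> U t" for w t z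
  proof -
    define X where "X = mob b w * cis (2 * pi * K * t / real n) * rt (Y t z)"
    have XX: "cmod X < 1" "l * X^n = mob v z" using Xfact[OF w z X_def] by auto
    have FX: "F w t z = mob (-b) X" by (simp add: F_def X_def)
    have FD: "F w t z \<in> ball 0 1" using FX mob_in_D[of "-b" X] b XX by simp
    have "mob b (F w t z) = X" unfolding FX by (rule mob_inv1[OF b]) (use mob_den_nz[of "-b" X] b XX in simp)
    then have "B (F w t z) = mob (-v) (mob v z)" using Bform[OF FD] XX by simp
    also have "\<dots> = z" by (rule mob_inv2[OF v]) (use mob_den_nz[OF v, of z] UD'[OF z] in auto)
    finally show ?thesis using FD by simp
  qed
  have Fhol: "F w t holomorphic_on U t" if w: "w \<in> fibre0 B" for w t
  proof -
    have h1: "(\<lambda>z. Y t z) holomorphic_on U t" unfolding Y_def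
      by (intro holomorphic_intros holomorphic_on_subset[OF mob_holo[OF v] UD]) (use vcis0 in auto)
    have h2: "(\<lambda>z. Ln (Y t z)) holomorphic_on U t"
      by (rule holomorphic_on_Ln'[OF _ h1]) (force simp: complex_nonpos_Reals_iff dest: Upos)
    define X where "X z = mob b w * cis (2 * pi * K * t / real n) * rt (Y t z)" for z
    have h3: "X holomorphic_on U t" unfolding X_def rt_def
      apply (intro holomorphic_intros h1)
      using npos by (force simp: complex_nonpos_Reals_iff dest: Upos)+
    have h4: "X ` U t \<subseteq> ball 0 1"
    proof
      fix y assume "y \<in> X ` U t"
      then obtain z where z: "z \<in> U t" "y = X z" by blast
      then show "y \<in> ball 0 1" using Xfact[OF w z(1), of "X z"] by (simp add: X_def)
    qed
    have "(mob (-b) \<circ> X) holomorphic_on U t"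
      by (rule holomorphic_on_compose_gen[OF h3 mob_holo h4]) (use b in simp)
    moreover have "F w t = mob (-b) \<circ> X" by (simp add: F_def X_def fun_eq_iff)
    ultimately show ?thesis by simp
  qed
  show ?thesis
    unfolding monodromy_perms_def
  proof (intro CollectI exI[of _ p] conjI ballI allI impI)
    show "path p" using pc by (simp add: path_def)
    show "pathstart p = 0" "pathfinish p = 0" using p0 p1 by (auto simp: pathstart_def pathfinish_def)
    show "path_image p \<subseteq> ball 0 1 - crit_values B" using p_props crit by (auto simp: path_image_def)
    show "tau \<mu> w = w" if "w \<notin> fibre0 B" for w using that by (simp add: tau_def)
  next
    fix w assume w: "w \<in> fibre0 B"
    have wD: "w \<in> ball 0 1" using w by (simp add: fibre0_def)
    have AC: "analytic_continuation_along p (F w) U"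
      unfolding analytic_continuation_along_def
    proof (intro ballI conjI)
      fix t :: real assume t: "t \<in> {0..1}"
      show "open (U t)" "p t \<in> U t" "F w t holomorphic_on U t" using Uopen pU Fhol[OF w] by auto
      define d where "d = 1 / (8 * (K + 1))"
      have d0: "d > 0" using K0 by (simp add: d_def)
      show "\<exists>d>0. \<forall>s\<in>{0..1}. \<bar>s - t\<bar> < d \<longrightarrow> p s \<in> U t \<and>
            (\<exists>e>0. ball (p s) e \<subseteq> U s \<inter> U t \<and> (\<forall>z\<in>ball (p s) e. F w s z = F w t z))"
      proof (rule exI[of _ d], intro conjI d0 ballI impI)
        fix s :: real assume s: "s \<in> {0..1}" "\<bar>s - t\<bar> < d"
        define \<theta> where "\<theta> = 2 * pi * K * (s - t)"
        have "\<bar>\<theta>\<bar> = 2 * pi * K * \<bar>s - t\<bar>" using K0 by (simp add: \<theta>_def abs_mult)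
        also have "\<dots> \<le> 2 * pi * K * d" using s(2) K0 by (intro mult_left_mono) auto
        also have "\<dots> = (pi / 4) * (K / (K + 1))" using K0 by (simp add: d_def field_simps)
        also have "\<dots> \<le> pi / 4" using K0 by (intro mult_left_le) auto
        finally have th: "\<bar>\<theta>\<bar> \<le> pi / 4" .
        have th2: "-(pi/2) < \<theta>" "\<theta> < pi/2" "-pi < \<theta>" "\<theta> \<le> pi" using th pi_gt_zero by arith+
        have Yrel: "Y t z = Y s z * cis \<theta>" for z
          by (simp add: Y_def \<theta>_def right_diff_distrib flip: cis_divide)
        have "Re (Y t (p s)) = cos \<theta>" using Yrel[of "p s"] Ysame[of s] by simp
        also have "cos \<theta> > 0" using th2 by (intro cos_gt_zero_pi)
        finally have "Re (Y t (p s)) > 0" .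
        then show "p s \<in> U t" unfolding U_def using p_props[of s] by simp
        have "open (U s \<inter> U t)" "p s \<in> U s \<inter> U t" using Uopen pU \<open>p s \<in> U t\<close> by auto
        then obtain e where e: "e > 0" "ball (p s) e \<subseteq> U s \<inter> U t" using open_contains_ball_eq by blast
        have eq: "F w s z = F w t z" if z: "z \<in> U s \<inter> U t" for z
        proof -
          have Ys: "Re (Y s z) > 0" using z Upos by auto
          then have Ys0: "Y s z \<noteq> 0" by auto
          have ImL: "\<bar>Im (Ln (Y s z))\<bar> < pi / 2" using Re_Ln_pos_lt_imp[OF Ys] .
          have Lc: "Ln (cis \<theta>) = \<theta> * \<i>" using th2 by (intro Ln_cis) auto
          have "Ln (Y t z) = Ln (Y s z) + \<theta> * \<i>" unfolding Yrel
            by (subst Ln_times_simple) (use Ys0 ImL th Lc in auto)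
          then have "rt (Y t z) = rt (Y s z) * cis (\<theta> / real n)"
            unfolding rt_def cis_conv_exp by (simp add: add_divide_distrib exp_add mult.commute)
          then have "mob b w * cis (2 * pi * K * t / real n) * rt (Y t z) =
                     mob b w * (cis (2 * pi * K * t / real n) * cis (\<theta> / real n)) * rt (Y s z)"
            by (simp add: mult_ac)
          also have "cis (2 * pi * K * t / real n) * cis (\<theta> / real n) = cis (2 * pi * K * s / real n)"
            by (simp add: cis_mult \<theta>_def add_divide_distrib[symmetric] algebra_simps)
          finally have eqX: "mob b w * cis (2 * pi * K * t / real n) * rt (Y t z) =
                     mob b w * cis (2 * pi * K * s / real n) * rt (Y s z)" by (simp add: mult_ac)
          show ?thesis by (simp only: F_def eqX)
        qed
        show "\<exists>e>0. ball (p s) e \<subseteq> U s \<inter> U t \<and> (\<forall>z\<in>ball (p s) e. F w s z = F w t z)"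
          using e eq by blast
      qed
    qed
    have li: "local_inverse_at_0 B (F w 0) (U 0)"
    proof -
      obtain r where r: "r > 0" "ball 0 r \<subseteq> U 0" using Uopen[of 0] pU[of 0] p0 open_contains_ball_eq by metis
      then show ?thesis unfolding local_inverse_at_0_def using Fgood[OF w] by blast
    qed
    have Y00: "Y 0 0 = 1" using Ysame[of 0] p0 by simp
    have Y10: "Y 1 0 = 1" using Ysame[of 1] p1 by simp
    have F00: "F w 0 0 = w"
      unfolding F_def using Y00 rt1 mob_inv2[OF b, of w] mob_den_nz[OF b, of w] wD by simp
    have F10: "F w 1 0 = tau \<mu> w"
      unfolding F_def tau_def using Y10 rt1 w k(2) by (simp add: K_def mult.commute)
    show "\<exists>f U. analytic_continuation_along p f U \<and> local_inverse_at_0 B (f 0) (U 0) \<and> f 0 0 = w \<and> f 1 0 = tau \<mu> w"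
      using AC li F00 F10 by blast
  qed
qed


lemma root_norm: "\<mu>^n = 1 \<Longrightarrow> cmod \<mu> = 1"
  using power_eq_imp_eq_base[of "cmod \<mu>" n 1] n2 by (metis norm_ge_zero norm_one norm_power power_one zero_le_one zero_less_numeral less_le_trans)

lemma tau_fibre: assumes "\<nu>^n = 1" "w \<in> fibre0 B" shows "tau \<nu> w \<in> fibre0 B" "mob b (tau \<nu> w) = \<nu> * mob b w"
proof -
  have wD: "w \<in> ball 0 1" and lw: "l * mob b w ^ n = -v" using assms(2) fibre_iff by auto
  have X: "cmod (\<nu> * mob b w) < 1" using root_norm[OF assms(1)] mob_in_D[OF b, of w] wD by (simp add: norm_mult)
  have t: "tau \<nu> w = mob (-b) (\<nu> * mob b w)" using assms(2) by (simp add: tau_def)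
  show m: "mob b (tau \<nu> w) = \<nu> * mob b w" unfolding t
    by (rule mob_inv1[OF b]) (use mob_den_nz[of "-b" "\<nu> * mob b w"] b X in simp)
  have "tau \<nu> w \<in> ball 0 1" unfolding t using mob_in_D[of "-b"] b X by simp
  moreover have "l * mob b (tau \<nu> w) ^ n = -v" using m lw assms(1) by (simp add: power_mult_distrib)
  ultimately show "tau \<nu> w \<in> fibre0 B" using fibre_iff by simp
qed

lemma tau_comp: assumes "\<nu>^n = 1" shows "tau \<mu> \<circ> tau \<nu> = tau (\<mu> * \<nu>)"
proof
  fix w
  show "(tau \<mu> \<circ> tau \<nu>) w = tau (\<mu> * \<nu>) w"
  proof (cases "w \<in> fibre0 B")
    case True
    then show ?thesis using tau_fibre[OF assms True] by (simp add: tau_def mult_ac)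
  next
    case False
    then show ?thesis by (simp add: tau_def)
  qed
qed

lemma tau_one: "tau 1 = id"
proof
  fix w
  show "tau 1 w = id w"
  proof (cases "w \<in> fibre0 B")
    case True
    then have "w \<in> ball 0 1" by (simp add: fibre0_def)
    then show ?thesis using True mob_inv2[OF b, of w] mob_den_nz[OF b, of w] by (simp add: tau_def)
  qed (simp add: tau_def)
qed

lemma carrier_eq: "monodromy_perms B = tau ` {\<mu>. \<mu>^n = 1}"
  using perm_is_tau tau_in by blast

lemma tau_inj: "inj_on tau {\<mu>. \<mu>^n = 1}"
proof (rule inj_onI)
  fix \<mu> \<nu> assume m: "\<mu> \<in> {\<mu>. \<mu>^n = 1}" and nu: "\<nu> \<in> {\<mu>. \<mu>^n = 1}" and e: "tau \<mu> = tau \<nu>"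
  have "mob b (tau \<mu> 0) = mob b (tau \<nu> 0)" using e by simp
  then have "\<mu> * mob b 0 = \<nu> * mob b 0" using tau_fibre(2)[OF _ zero_fibre] m nu by simp
  then show "\<mu> = \<nu>" using b0 by (simp add: mob_def)
qed

theorem main: "group (monodromy_group B) \<and> cyclic_group (monodromy_group B) \<and> order (monodromy_group B) = n"
proof -
  define G where "G = monodromy_group B"
  have cG: "carrier G = tau ` {\<mu>. \<mu>^n = 1}" by (simp add: G_def monodromy_group_def carrier_eq)
  have mG: "x \<otimes>\<^bsub>G\<^esub> y = x \<circ> y" for x y by (simp add: G_def monodromy_group_def)
  have oG: "\<one>\<^bsub>G\<^esub> = id" by (simp add: G_def monodromy_group_def)
  have grp: "group G"
  proof (rule groupI)
    fix x y assume "x \<in> carrier G" "y \<in> carrier G"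
    then obtain \<mu> \<nu> where "\<mu>^n = 1" "\<nu>^n = 1" "x = tau \<mu>" "y = tau \<nu>" using cG by auto
    then show "x \<otimes>\<^bsub>G\<^esub> y \<in> carrier G" using tau_comp cG mG by (auto simp: power_mult_distrib)
  next
    have "tau 1 \<in> tau ` {\<mu>. \<mu>^n = 1}" by simp
    then show "\<one>\<^bsub>G\<^esub> \<in> carrier G" using cG oG tau_one by simp
  next
    fix x y z show "x \<otimes>\<^bsub>G\<^esub> y \<otimes>\<^bsub>G\<^esub> z = x \<otimes>\<^bsub>G\<^esub> (y \<otimes>\<^bsub>G\<^esub> z)" by (simp add: mG o_assoc)
  next
    fix x show "\<one>\<^bsub>G\<^esub> \<otimes>\<^bsub>G\<^esub> x = x" by (simp add: mG oG)
  next
    fix x assume "x \<in> carrier G"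
    then obtain \<mu> where mu: "\<mu>^n = 1" "x = tau \<mu>" using cG by auto
    have "tau (\<mu>^(n-1)) \<circ> tau \<mu> = tau (\<mu>^(n-1) * \<mu>)" using tau_comp mu by simp
    also have "\<mu>^(n-1) * \<mu> = 1" using mu n2 by (metis power_Suc2 Suc_diff_1 less_le_trans zero_less_numeral)
    also have "tau 1 = id" by (rule tau_one)
    finally have eq: "tau (\<mu>^(n-1)) \<circ> tau \<mu> = id" .
    have "tau (\<mu>^(n-1)) \<otimes>\<^bsub>G\<^esub> x = \<one>\<^bsub>G\<^esub>" by (simp only: mG oG mu(2) eq)
    moreover have "(\<mu>^(n-1))^n = 1" by (metis mu(1) power_mult mult.commute power_one)
    then have "tau (\<mu>^(n-1)) \<in> carrier G" using cG by simp
    ultimately show "\<exists>y\<in>carrier G. y \<otimes>\<^bsub>G\<^esub> x = \<one>\<^bsub>G\<^esub>" by blast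
  qed
  have npos: "n > 0" using n2 by simp
  define \<omega> where "\<omega> = cis (2 * pi / real n)"
  have om: "\<omega>^n = 1" using npos by (simp add: \<omega>_def Complex.DeMoivre)
  have pw: "tau \<omega> [^]\<^bsub>G\<^esub> (m::nat) = tau (\<omega>^m)" for m
  proof (induction m)
    case 0
    then show ?case using oG tau_one by simp
  next
    case (Suc m)
    then show ?case using mG tau_comp[OF om] by (simp add: mult.commute)
  qed
  have cyc: "cyclic_group G"
    unfolding group.cyclic_group[OF grp]
  proof (intro bexI[of _ "tau \<omega>"])
    show "tau \<omega> \<in> carrier G" using cG om by auto
    show "carrier G = range (\<lambda>k::int. tau \<omega> [^]\<^bsub>G\<^esub> k)"
    proof
      show "range (\<lambda>k::int. tau \<omega> [^]\<^bsub>G\<^esub> k) \<subseteq> carrier G"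
        using group.int_pow_closed[OF grp] \<open>tau \<omega> \<in> carrier G\<close> by blast
      show "carrier G \<subseteq> range (\<lambda>k::int. tau \<omega> [^]\<^bsub>G\<^esub> k)"
      proof
        fix x assume "x \<in> carrier G"
        then obtain \<mu> where mu: "\<mu>^n = 1" "x = tau \<mu>" using cG by auto
        then obtain j where j: "\<mu> = cis (2 * pi * real j / real n)"
          using Complex.bij_betw_roots_unity[OF npos] unfolding bij_betw_def by auto
        have "\<mu> = \<omega>^j" using j by (simp add: \<omega>_def Complex.DeMoivre mult_ac)
        then have "x = tau \<omega> [^]\<^bsub>G\<^esub> (int j)" using mu pw int_pow_int by metis
        then show "x \<in> range (\<lambda>k::int. tau \<omega> [^]\<^bsub>G\<^esub> k)" by blast
      qed
    qed
  qed
  have "order G = n"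
    unfolding order_def cG using card_image[OF tau_inj] card_roots_unity_eq[OF npos] by simp
  then show ?thesis using grp cyc G_def by simp
qed

end

lemma prod_list_one: "(\<Prod>a\<leftarrow>as. (1::complex)) = 1"
  by (induction as) auto

lemma blaschke_structure:
  assumes nb: "normalized_blaschke c as" and len: "length as = n"
    and cv: "card (crit_values (blaschke c as)) = 1"
  shows "\<exists>b v l. bstr (blaschke c as) b v l n"
proof -
  define B where "B = blaschke c as"
  have c1: "cmod c = 1" and asD: "\<forall>a\<in>set as. cmod a < 1" and B0: "B 0 = 0"
    and d0: "Re (deriv B 0) > 0" and simple: "\<forall>a\<in>ball 0 1. B a = 0 \<longrightarrow> deriv B a \<noteq> 0"
    using nb unfolding normalized_blaschke_def B_def by auto
  have c0: "c \<noteq> 0" using c1 by auto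
  have cc: "c * cnj c = 1" using c1 complex_norm_square[of c] by simp
  obtain v where crit: "crit_values B = {v}" using cv B_def card_1_singletonE by blast
  then have "v \<in> B ` crit_points B" unfolding crit_values_def by simp
  then obtain a0 where "a0 \<in> crit_points B" "B a0 = v" by blast
  then have a0: "a0 \<in> ball 0 1" "deriv B a0 = 0" "B a0 = v" unfolding crit_points_def by auto
  have critv: "B x = v" if "x \<in> ball 0 1" "deriv B x = 0" for x
    using crit that unfolding crit_values_def crit_points_def by auto
  have asne: "as \<noteq> []"
  proof
    assume "as = []"
    then have "B 0 = c" by (simp add: B_def blaschke_def)
    then show False using B0 c0 by simp
  qed
  then have npos: "n \<ge> 1" using len by (cases as) auto
  have BD: "cmod (B x) < 1" if "cmod x < 1" for x
    unfolding B_def by (rule B_in[OF c1 asD that asne])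
  have vD: "cmod v < 1" using BD a0 by auto
  have QD: "Qf as x \<noteq> 0" if "cmod x < 1" for x using Q_nz[OF c1 asD] that by simp
  define N where "N = Pp c as - smult v (Qp as)"
  have polyN: "poly N x = Pf c as x - v * Qf as x" for x
    by (simp add: N_def poly_Pp poly_Qp)
  have degN: "degree N = n" and N0: "N \<noteq> 0"
  proof -
    have lp: "degree (\<Prod>a\<leftarrow>as. [:-a, 1:]) \<le> n \<and> coeff (\<Prod>a\<leftarrow>as. [:-a, 1:]) n = 1"
      using lin_prod[of "\<lambda>a. -a" "\<lambda>a. 1" as] len by (simp add: prod_list_one)
    have lq: "degree (Qp as) \<le> n \<and> coeff (Qp as) n = (\<Prod>a\<leftarrow>as. - cnj a)"
      using lin_prod[of "\<lambda>a. 1" "\<lambda>a. - cnj a" as] len unfolding Qp_def by simp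
    have cN: "coeff N n = c - v * (\<Prod>a\<leftarrow>as. - cnj a)" using lp lq by (simp add: N_def Pp_def)
    have "cmod (\<Prod>a\<leftarrow>as. - cnj a) \<le> cmod (\<Prod>a\<leftarrow>as. (1::complex))"
      by (rule norm_prod_list_le) (use asD in auto)
    also have "(\<Prod>a\<leftarrow>as. (1::complex)) = 1" by (rule prod_list_one)
    finally have pl: "cmod (\<Prod>a\<leftarrow>as. - cnj a) \<le> 1" by simp
    have "cmod (v * (\<Prod>a\<leftarrow>as. - cnj a)) \<le> cmod v" using pl by (simp add: norm_mult mult_left_le)
    then have "cmod (v * (\<Prod>a\<leftarrow>as. - cnj a)) < 1" using vD by simp
    then have cN0: "coeff N n \<noteq> 0" using cN c1 by auto
    have "degree N \<le> n" unfolding N_def Pp_def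
      by (intro degree_diff_le) (use lp lq in \<open>auto intro: order_trans[OF degree_smult_le]\<close>)
    then show "degree N = n" using le_degree[OF cN0] by simp
    show "N \<noteq> 0" using cN0 by auto
  qed
  have rootsD: "cmod z < 1" if z: "poly N z = 0" for z
  proof (rule ccontr)
    assume "\<not> cmod z < 1"
    then have z1: "cmod z \<ge> 1" by simp
    have le: "cmod (Qf as z) \<le> cmod (Pf c as z)" by (rule PQ_out[OF c1 asD z1])
    have P0: "Pf c as z \<noteq> 0" by (rule P_nz[OF c1 asD z1])
    have "Pf c as z = v * Qf as z" using z polyN by simp
    then have "cmod (Pf c as z) = cmod v * cmod (Qf as z)" by (simp add: norm_mult)
    also have "\<dots> \<le> cmod v * cmod (Pf c as z)" using le by (simp add: mult_left_mono)
    also have "\<dots> < cmod (Pf c as z)" using vD P0 by simp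
    finally show False by simp
  qed
  define Z where "Z = {z. poly N z = 0}"
  define k where "k z = Polynomial.order z N" for z
  have finZ: "finite Z" unfolding Z_def by (rule poly_roots_finite[OF N0])
  have ZD: "Z \<subseteq> ball 0 1" using rootsD unfolding Z_def by auto
  have kpos: "\<forall>z\<in>Z. k z > 0" using N0 order_root unfolding Z_def k_def by auto
  define L where "L = lead_coeff N"
  have L0: "L \<noteq> 0" using N0 by (simp add: L_def)
  have eqN: "N = smult L (\<Prod>z\<in>Z. [:-z, 1:] ^ k z)"
    using complex_poly_decompose[of N] by (simp add: L_def Z_def k_def)
  have decomp: "poly N x = L * (\<Prod>z\<in>Z. (x - z) ^ k z)" for x
    by (subst eqN) (simp add: poly_prod algebra_simps)
  have sumk: "(\<Sum>z\<in>Z. k z) = n"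
  proof -
    have "n = degree (\<Prod>z\<in>Z. [:-z, 1:] ^ k z)" using degN eqN L0 by (metis degree_smult_eq)
    also have "\<dots> = (\<Sum>z\<in>Z. degree ([:-z, 1:] ^ k z))" by (rule degree_prod_sum_eq) simp
    also have "\<dots> = (\<Sum>z\<in>Z. k z)" by (simp add: degree_linear_power)
    finally show ?thesis by simp
  qed
  define Dv where "Dv x = Qf as x - cnj v * Pf c as x" for x
  have DvZ0: "Dv x = c * cnj L * (\<Prod>z\<in>Z. (1 - cnj z * x) ^ k z)" if x0: "x \<noteq> 0" for x
  proof -
    have r1: "x^n * cnj (\<Prod>a\<leftarrow>as. 1 / cnj x - a) = Qf as x"
      using recip1[OF c1 asD x0] len by (simp add: Qf_def)
    have r2: "x^n * cnj (Qf as (1 / cnj x)) = (\<Prod>a\<leftarrow>as. x - a)"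
      using recip2[OF c1 asD x0] len by (simp add: Qf_def)
    have "c * x^n * cnj (poly N (1 / cnj x)) =
          c * cnj c * (x^n * cnj (\<Prod>a\<leftarrow>as. 1 / cnj x - a)) - c * cnj v * (x^n * cnj (Qf as (1 / cnj x)))"
      by (simp add: polyN Pf_def algebra_simps)
    also have "\<dots> = Dv x" unfolding r1 r2 cc by (simp add: Dv_def Pf_def mult_ac)
    finally have s1: "Dv x = c * x^n * cnj (poly N (1 / cnj x))" by simp
    have xn: "x^n = (\<Prod>z\<in>Z. x ^ k z)" using sumk power_sum[of x k Z] by simp
    have "x^n * cnj (poly N (1 / cnj x)) = cnj L * ((\<Prod>z\<in>Z. x ^ k z) * (\<Prod>z\<in>Z. cnj (1 / cnj x - z) ^ k z))"
      unfolding decomp xn by simp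
    also have "(\<Prod>z\<in>Z. x ^ k z) * (\<Prod>z\<in>Z. cnj (1 / cnj x - z) ^ k z) = (\<Prod>z\<in>Z. (x * cnj (1 / cnj x - z)) ^ k z)"
      by (simp add: prod.distrib[symmetric] power_mult_distrib)
    also have "\<dots> = (\<Prod>z\<in>Z. (1 - cnj z * x) ^ k z)"
    proof (rule prod.cong[OF refl])
      fix z
      have "x * cnj (1 / cnj x - z) = 1 - cnj z * x" using x0 by (simp add: field_simps)
      then show "(x * cnj (1 / cnj x - z)) ^ k z = (1 - cnj z * x) ^ k z" by simp
    qed
    finally show ?thesis using s1 by (simp add: mult_ac)
  qed
  have DvZ: "Dv x = c * cnj L * (\<Prod>z\<in>Z. (1 - cnj z * x) ^ k z)" for x
  proof (cases "x = 0")
    case False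
    then show ?thesis by (rule DvZ0)
  next
    case True
    define Dp where "Dp = Qp as - smult (cnj v) (Pp c as)"
    define Gp where "Gp = smult (c * cnj L) (\<Prod>z\<in>Z. [:1, - cnj z:] ^ k z)"
    have pD: "poly Dp y = Dv y" for y by (simp add: Dp_def Dv_def poly_Pp poly_Qp)
    have pG: "poly Gp y = c * cnj L * (\<Prod>z\<in>Z. (1 - cnj z * y) ^ k z)" for y
      by (simp add: Gp_def poly_prod algebra_simps)
    have "poly Dp 0 = poly Gp 0"
    proof (rule eq_at0)
      show "isCont (poly Dp) 0" by (rule poly_isCont)
      show "isCont (poly Gp) 0" by (rule poly_isCont)
      fix y :: complex assume "y \<noteq> 0"
      then show "poly Dp y = poly Gp y" unfolding pD pG by (rule DvZ0)
    qed
    then show ?thesis using True pD pG by simp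
  qed
  define lam where "lam = L / (c * cnj L)"
  have lam1: "cmod lam = 1" using c1 L0 by (simp add: lam_def norm_divide norm_mult)
  define G where "G x = (\<Prod>z\<in>Z. mob z x ^ k z)" for x
  have mobB: "mob v (B x) = lam * G x" if x: "x \<in> ball 0 1" for x
  proof -
    have x1: "cmod x < 1" using x by simp
    have Q0: "Qf as x \<noteq> 0" using QD x1 .
    have den: "1 - cnj z * x \<noteq> 0" if "z \<in> Z" for z using mob_den_nz[of z x] ZD that x1 by auto
    have D0: "Dv x \<noteq> 0" unfolding DvZ using c0 L0 den finZ by (simp add: prod_zero_iff)
    have "mob v (B x) = (Pf c as x / Qf as x - v) / (1 - cnj v * (Pf c as x / Qf as x))"
      by (simp add: mob_def B_def B_PQ)
    also have "\<dots> = poly N x / Dv x" using Q0 D0 by (simp add: polyN Dv_def field_simps)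
    also have "\<dots> = (L * (\<Prod>z\<in>Z. (x - z) ^ k z)) / (c * cnj L * (\<Prod>z\<in>Z. (1 - cnj z * x) ^ k z))"
      by (simp add: decomp DvZ)
    also have "\<dots> = lam * (\<Prod>z\<in>Z. (x - z) ^ k z / (1 - cnj z * x) ^ k z)"
      by (simp add: lam_def prod_dividef)
    also have "\<dots> = lam * G x" by (simp add: G_def mob_def power_divide)
    finally show ?thesis .
  qed
  have BG: "B x = mob (-v) (lam * G x)" if x: "x \<in> ball 0 1" for x
  proof -
    have "B x = mob (-v) (mob v (B x))"
      proof (rule mob_inv2[OF vD, symmetric])
      have "cmod (B x) < 1" using BD x by simp
      then show "1 - cnj v * B x \<noteq> 0" using mob_den_nz[OF vD, of "B x"] by simp
    qed
    then show ?thesis using mobB[OF x] by simp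
  qed
  have card1: "card Z = 1"
  proof (rule ccontr)
    assume ne1: "card Z \<noteq> 1"
    have "Z \<noteq> {}"
    proof
      assume "Z = {}"
      then have "(\<Sum>z\<in>Z. k z) = 0" by simp
      with sumk npos show False by simp
    qed
    then have "card Z \<noteq> 0" using finZ by simp
    then have c2: "card Z \<ge> 2" using ne1 by linarith
    obtain x0 where x0: "x0 \<in> ball 0 1" "x0 \<notin> Z"
      and T0: "(\<Sum>z\<in>Z. of_nat (k z) * (1 - cnj z * z) / ((x0 - z) * (1 - cnj z * x0))) = 0"
      using crit_exists[OF finZ ZD kpos c2] by blast
    have x01: "cmod x0 < 1" using x0 by simp
    have zD: "cmod z < 1" if "z \<in> Z" for z using ZD that by auto
    have den: "1 - cnj z * x0 \<noteq> 0" if "z \<in> Z" for z using mob_den_nz[OF zD[OF that], of x0] x01 by simp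
    have mz: "mob z x0 \<noteq> 0" if "z \<in> Z" for z using mob_zero_iff[OF den[OF that]] x0(2) that by auto
    have fd: "((\<lambda>x. mob z x ^ k z) has_field_derivative
                of_nat (k z) * (Dm z x0 * mob z x0 ^ (k z - Suc 0))) (at x0)" if "z \<in> Z" for z
      by (rule DERIV_power[OF mob_deriv[OF den[OF that]]])
    have Gd: "((\<lambda>u. \<Prod>z\<in>Z. mob z u ^ k z) has_field_derivative
        (\<Prod>z\<in>Z. mob z x0 ^ k z) * (\<Sum>z\<in>Z. of_nat (k z) * (Dm z x0 * mob z x0 ^ (k z - Suc 0)) / mob z x0 ^ k z)) (at x0)"
      by (rule has_field_derivative_prod') (use mz fd in auto)
    have trm: "of_nat (k z) * (Dm z x0 * mob z x0 ^ (k z - Suc 0)) / mob z x0 ^ k z =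
               of_nat (k z) * (1 - cnj z * z) / ((x0 - z) * (1 - cnj z * x0))" if z: "z \<in> Z" for z
    proof -
      have kk: "k z = Suc (k z - Suc 0)" using kpos z by simp
      have mp: "mob z x0 ^ k z = mob z x0 * mob z x0 ^ (k z - Suc 0)" by (subst kk) simp
      have mp0: "mob z x0 ^ (k z - Suc 0) \<noteq> 0" using mz[OF z] by simp
      have "of_nat (k z) * (Dm z x0 * mob z x0 ^ (k z - Suc 0)) / mob z x0 ^ k z = of_nat (k z) * Dm z x0 / mob z x0"
        unfolding mp using mp0 by simp
      also have "\<dots> = of_nat (k z) * (1 - cnj z * z) / ((x0 - z) * (1 - cnj z * x0))"
        using den[OF z] mz[OF z] by (simp add: Dm_def mob_def power2_eq_square)
      finally show ?thesis .
    qed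
    have sum0: "(\<Sum>z\<in>Z. of_nat (k z) * (Dm z x0 * mob z x0 ^ (k z - Suc 0)) / mob z x0 ^ k z) = 0"
      using T0 trm by simp
    have Gd0: "(G has_field_derivative 0) (at x0)"
    proof -
      have "G = (\<lambda>u. \<Prod>z\<in>Z. mob z u ^ k z)" by (simp add: G_def fun_eq_iff)
      then show ?thesis using Gd sum0 by simp
    qed
    have "cmod (B x0) < 1" using BD x01 .
    then have lamG: "cmod (lam * G x0) < 1" using mobB[OF x0(1)] mob_in_D[OF vD] by metis
    have "((\<lambda>x. mob (-v) (lam * G x)) has_field_derivative Dm (-v) (lam * G x0) * (lam * 0)) (at x0)"
    proof (rule DERIV_chain2[OF mob_deriv DERIV_cmult[OF Gd0]])
      show "1 - cnj (- v) * (lam * G x0) \<noteq> 0" using mob_den_nz[of "-v" "lam * G x0"] vD lamG by simp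
    qed
    then have "((\<lambda>x. mob (-v) (lam * G x)) has_field_derivative 0) (at x0)" by simp
    then have "(B has_field_derivative 0) (at x0)"
      by (rule has_field_derivative_transform_within_open[OF _ open_ball x0(1)]) (use BG in simp)
    then have "deriv B x0 = 0" by (rule DERIV_imp_deriv)
    then have "B x0 = v" using critv x0(1) by simp
    then have "lam * G x0 = 0" using mobB[OF x0(1)] by (simp add: mob_def)
    then have "G x0 = 0" using lam1 by auto
    then obtain z where "z \<in> Z" "mob z x0 ^ k z = 0" using finZ by (auto simp: G_def prod_zero_iff)
    then show False using mz by simp
  qed
  then obtain b where Zb: "Z = {b}" using card_1_singletonE by blast
  have kb: "k b = n" using sumk Zb by simp
  have bD: "cmod b < 1" using ZD Zb by auto
  have Bform: "B x = mob (-v) (lam * mob b x ^ n)" if "x \<in> ball 0 1" for x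
    using BG[OF that] Zb kb by (simp add: G_def)
  have lam0: "lam \<noteq> 0" using lam1 by auto
  have Bder: "(B has_field_derivative Dm (-v) (lam * mob b x ^ n) * (lam * (of_nat n * (Dm b x * mob b x ^ (n - Suc 0))))) (at x)"
    and Bder0: "Dm (-v) (lam * mob b x ^ n) \<noteq> 0" "Dm b x \<noteq> 0"
    if x: "x \<in> ball 0 1" for x
  proof -
    have x1: "cmod x < 1" using x by simp
    have denb: "1 - cnj b * x \<noteq> 0" using mob_den_nz[OF bD, of x] x1 by simp
    have "lam * mob b x ^ n = mob v (B x)" using mobB[OF x] Zb kb by (simp add: G_def)
    then have inD': "cmod (lam * mob b x ^ n) < 1" using mob_in_D[OF vD] BD x1 by metis
    have denv: "1 - cnj (- v) * (lam * mob b x ^ n) \<noteq> 0" using mob_den_nz[of "-v"] vD inD' by simp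
    have "((\<lambda>x. mob (-v) (lam * mob b x ^ n)) has_field_derivative
           Dm (-v) (lam * mob b x ^ n) * (lam * (of_nat n * (Dm b x * mob b x ^ (n - Suc 0))))) (at x)"
      by (rule DERIV_chain2[OF mob_deriv[OF denv] DERIV_cmult[OF DERIV_power[OF mob_deriv[OF denb]]]])
    then show "(B has_field_derivative Dm (-v) (lam * mob b x ^ n) * (lam * (of_nat n * (Dm b x * mob b x ^ (n - Suc 0))))) (at x)"
      by (rule has_field_derivative_transform_within_open[OF _ open_ball x]) (use Bform in simp)
    show "Dm (-v) (lam * mob b x ^ n) \<noteq> 0" by (rule Dm_nz) (use vD denv in auto)
    show "Dm b x \<noteq> 0" by (rule Dm_nz[OF bD denb])
  qed
  have n2: "n \<ge> 2"
  proof (rule ccontr)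
    assume "\<not> n \<ge> 2"
    then have n1: "n = 1" using npos by simp
    have "deriv B a0 = Dm (-v) (lam * mob b a0 ^ n) * (lam * (of_nat n * (Dm b a0 * mob b a0 ^ (n - Suc 0))))"
      by (rule DERIV_imp_deriv[OF Bder[OF a0(1)]])
    also have "\<dots> \<noteq> 0" using Bder0[OF a0(1)] lam0 n1 by simp
    finally show False using a0(2) by simp
  qed
  have b0: "b \<noteq> 0"
  proof
    assume b: "b = 0"
    have z0: "(0::complex) \<in> ball 0 1" by simp
    have "deriv B 0 = Dm (-v) (lam * mob b 0 ^ n) * (lam * (of_nat n * (Dm b 0 * mob b 0 ^ (n - Suc 0))))"
      by (rule DERIV_imp_deriv[OF Bder[OF z0]])
    also have "\<dots> = 0" using b n2 by (simp add: mob_def)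
    finally show False using d0 by simp
  qed
  have v0: "v \<noteq> 0" using simple a0 by auto
  have "bstr B b v lam n"
    by (unfold_locales) (use bD vD lam1 b0 v0 n2 crit Bform B0 in auto)
  then show ?thesis unfolding B_def by blast
qed


theorem proposition5p3:
  fixes c :: complex and as :: "complex list" and n :: nat
  assumes "normalized_blaschke c as"
    and "length as = n"
    and "card (crit_values (blaschke c as)) = 1"
  shows "group (monodromy_group (blaschke c as)) \<and>
         cyclic_group (monodromy_group (blaschke c as)) \<and>
         order (monodromy_group (blaschke c as)) = n"
proof -
  obtain b v l where "bstr (blaschke c as) b v l n" using blaschke_structure[OF assms] by blast
  then show ?thesis by (rule bstr.main)
qed

end
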